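(* Let $(X,d)$ be an arbitrary metric space and let $p\in X$. Then the function $$\tau_p(x,y)=\log\Big(1+2\frac{d(x,y)}{\sqrt{d(x,p)d(y,p)}}\Big)$$ is a metric on $X\setminus\{p\}$. *)

theory Defs
  imports "HOL-Analysis.Analysis"
begin

end

theory Submission
  imports Defs
begin

lemma key_ineq:
  fixes a b c r s t :: real
  assumes a: "a > 0" and b: "b > 0" and c: "c > 0" and s: "s \<ge> 0" and t: "t \<ge> 0"
    and r: "r \<le> s + t" and r0: "r \<ge> 0"
    and h1: "b^2 \<le> t + c^2" and h2: "b^2 \<le> s + a^2"
  shows "1 + 2 * r / (a * c) \<le> (1 + 2 * s / (a * b)) * (1 + 2 * t / (b * c))"
proof -
  have k1: "b^2 - b*c \<le> t"
  proof (cases "b \<le> c")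
    case True then have "b*b \<le> b*c" using b by (intro mult_left_mono) auto
    then show ?thesis using t by (simp add: power2_eq_square)
  next
    case False then have "b*c \<ge> c*c" using c by (intro mult_right_mono) auto
    then show ?thesis using h1 by (simp add: power2_eq_square)
  qed
  have k2: "b^2 - a*b \<le> s"
  proof (cases "b \<le> a")
    case True then have "b*b \<le> a*b" using b by (intro mult_right_mono) auto
    then show ?thesis using s by (simp add: power2_eq_square)
  next
    case False then have "a*b \<ge> a*a" using a by (intro mult_left_mono) auto
    then show ?thesis using h2 by (simp add: power2_eq_square)
  qed
  have m1: "s * (b^2 - b*c) \<le> s * t" using k1 s by (intro mult_left_mono)
  have m2: "t * (b^2 - a*b) \<le> t * s" using k2 t by (intro mult_left_mono)
  have m3: "r * b^2 \<le> (s+t) * b^2" using r by (intro mult_right_mono) auto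
  have main: "r * b^2 \<le> t * a * b + s * b * c + 2 * s * t"
    using m1 m2 m3 by (simp add: algebra_simps)
  have "(1 + 2 * s / (a * b)) * (1 + 2 * t / (b * c)) - (1 + 2 * r / (a * c))
      = 2 * (t * a * b + s * b * c + 2 * s * t - r * b^2) / (a * b^2 * c)"
    using a b c by (simp add: field_simps power2_eq_square)
  moreover have "2 * (t * a * b + s * b * c + 2 * s * t - r * b^2) / (a * b^2 * c) \<ge> 0"
    using main a b c by (intro divide_nonneg_pos) auto
  ultimately show ?thesis by linarith
qed

theorem theorem2p1:
  fixes X :: "'a set" and d :: "'a \<Rightarrow> 'a \<Rightarrow> real" and p :: 'a
  assumes "Metric_space X d" and "p \<in> X"
  shows "Metric_space (X - {p}) (\<lambda>x y. ln (1 + 2 * d x y / sqrt (d x p * d y p)))"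
proof -
  interpret M: Metric_space X d by fact
  have pos: "d x p > 0" if "x \<in> X - {p}" for x
    using that assms(2) M.nonneg[of x p] M.zero[of x p] by force
  have sq: "sqrt (d x p * d y p) = sqrt (d x p) * sqrt (d y p)" for x y
    by (simp add: real_sqrt_mult)
  show ?thesis
  proof
    fix x y
    have "0 \<le> 2 * d x y / sqrt (d x p * d y p)" by simp
    then show "0 \<le> ln (1 + 2 * d x y / sqrt (d x p * d y p))" by simp
  next
    fix x y
    show "ln (1 + 2 * d x y / sqrt (d x p * d y p)) = ln (1 + 2 * d y x / sqrt (d y p * d x p))"
      by (simp add: M.commute[of x y] mult.commute)
  next
    fix x y assume x: "x \<in> X - {p}" and y: "y \<in> X - {p}"
    have sp: "sqrt (d x p * d y p) > 0" using pos[OF x] pos[OF y] by simp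
    have q0: "0 \<le> 2 * d x y / sqrt (d x p * d y p)" by simp
    have "(ln (1 + 2 * d x y / sqrt (d x p * d y p)) = 0) = (1 + 2 * d x y / sqrt (d x p * d y p) = 1)"
      using q0 by (subst ln_eq_zero_iff) linarith+
    also have "\<dots> = (d x y = 0)" using sp pos[OF x] pos[OF y] by simp
    finally have "(ln (1 + 2 * d x y / sqrt (d x p * d y p)) = 0) = (d x y = 0)" .
    then show "(ln (1 + 2 * d x y / sqrt (d x p * d y p)) = 0) = (x = y)"
      using x y by simp
  next
    fix x y z assume x: "x \<in> X - {p}" and y: "y \<in> X - {p}" and z: "z \<in> X - {p}"
    define a where "a = sqrt (d x p)"
    define b where "b = sqrt (d y p)"
    define c where "c = sqrt (d z p)"
    have a: "a > 0" and b: "b > 0" and c: "c > 0"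
      using pos[OF x] pos[OF y] pos[OF z] by (auto simp: a_def b_def c_def)
    have a2: "a^2 = d x p" and b2: "b^2 = d y p" and c2: "c^2 = d z p"
      by (auto simp: a_def b_def c_def)
    have r: "d x z \<le> d x y + d y z" using x y z M.triangle by auto
    have h1: "b^2 \<le> d y z + c^2" unfolding b2 c2 using y z assms(2) M.triangle by auto
    have h2: "b^2 \<le> d x y + a^2" unfolding b2 a2 using x y assms(2) M.triangle[of y x p] M.commute[of y x] by auto
    have K: "1 + 2 * d x z / (a * c) \<le> (1 + 2 * d x y / (a * b)) * (1 + 2 * d y z / (b * c))"
      by (rule key_ineq[OF a b c _ _ r _ h1 h2]) auto
    have p1: "0 < 1 + 2 * d x y / (a * b)" using a b by (simp add: add_pos_nonneg)
    have p2: "0 < 1 + 2 * d y z / (b * c)" using c b by (simp add: add_pos_nonneg)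
    have p3: "0 < 1 + 2 * d x z / (a * c)" using c a by (simp add: add_pos_nonneg)
    have "ln (1 + 2 * d x z / (a * c)) \<le> ln ((1 + 2 * d x y / (a * b)) * (1 + 2 * d y z / (b * c)))"
      using K p3 by simp
    also have "\<dots> = ln (1 + 2 * d x y / (a * b)) + ln (1 + 2 * d y z / (b * c))"
      using p1 p2 by (simp add: ln_mult)
    finally show "ln (1 + 2 * d x z / sqrt (d x p * d z p))
       \<le> ln (1 + 2 * d x y / sqrt (d x p * d y p)) + ln (1 + 2 * d y z / sqrt (d y p * d z p))"
      by (simp add: sq a_def b_def c_def)
  qed
qed

end
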